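(* Let $\mathcal{B}$ be a denumerable and measurable partition of $\Omega$ with $\underline{P}(B)>0$ for every $B\in\mathcal{B}$, and let $\Pi$ be the set of probability measures compatible with $\underline{P}$. For any event $A\in\mathscr{B}(\Omega)$, under the generalized Bayes rule, (i) $\mathcal{B}$ cannot induce sure loss in $A$, and (ii) $\mathcal{B}$ cannot contract $A$.
   Context: $\Omega$ is a separable, completely metrizable space with Borel $\sigma$-algebra $\mathscr{B}(\Omega)$; $\underline{P}$ is a Choquet capacity of order 2 on $\mathscr{B}(\Omega)$ (a coherent lower probability with weakly compact set of dominating measures satisfying $\underline{P}(A\cup B)\ge\underline{P}(A)+\underline{P}(B)-\underline{P}(A\cap B)$); $\Pi=\{P:P\ge\underline{P}\}$, $\underline{P}(A)=\inf_{P\in\Pi}P(A)$, $\overline{P}(A)=\sup_{P\in\Pi}P(A)=1-\underline{P}(A^c)$. Generalized Bayes rule: $\underline{P}_{\mathfrak{B}}(A\mid B)=\inf_{P\in\Pi}P(A\cap B)/P(B)$, $\overline{P}_{\mathfrak{B}}(A\mid B)=\sup_{P\in\Pi}P(A\cap B)/P(B)$. For an updating rule with conditional lower/upper probabilities $\underline{P}_\bullet,\overline{P}_\bullet$: $\mathcal{B}$ induces sure loss in $A$ if $\inf_{B\in\mathcal{B}}\underline{P}_\bullet(A\mid B)>\overline{P}(A)$ or $\sup_{B\in\mathcal{B}}\overline{P}_\bullet(A\mid B)<\underline{P}(A)$. $\mathcal{B}$ strictly contracts $A$ if $\underline{P}(A)<\inf_{B\in\mathcal{B}}\underline{P}_\bullet(A\mid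 B)\le\sup_{B\in\mathcal{B}}\overline{P}_\bullet(A\mid B)<\overline{P}(A)$; $\mathcal{B}$ contracts $A$ if this holds with either (but not both) of the two outer strict inequalities allowed to be an equality. *)

theory Defs
  imports "HOL-Probability.Probability"
begin

definition credal_set :: "('a::topological_space set \<Rightarrow> real) \<Rightarrow> 'a measure set" where
  "credal_set lP = {P. prob_space P \<and> sets P = sets borel \<and>
                        (\<forall>A\<in>sets borel. lP A \<le> measure P A)}"

definition weak_conv_seq :: "(nat \<Rightarrow> 'a::topological_space measure) \<Rightarrow> 'a measure \<Rightarrow> bool" where
  "weak_conv_seq Ps P \<longleftrightarrow>
     (\<forall>f :: 'a \<Rightarrow> real. continuous_on UNIV f \<and> bounded (range f) \<longrightarrow>
        (\<lambda>n. integral\<^sup>L (Ps n) f) \<longlonglongrightarrow> integral\<^sup>L P f)"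

text \<open>Weak compactness of a set of probability measures on a Polish space
  (where the weak topology is metrizable, so compactness = sequential compactness).\<close>
definition weakly_seq_compact_pm :: "'a::topological_space measure set \<Rightarrow> bool" where
  "weakly_seq_compact_pm M \<longleftrightarrow>
     (\<forall>Ps :: nat \<Rightarrow> 'a measure. (\<forall>n. Ps n \<in> M) \<longrightarrow>
        (\<exists>(r :: nat \<Rightarrow> nat) P. strict_mono r \<and> P \<in> M \<and> weak_conv_seq (Ps \<circ> r) P))"

definition choquet_capacity_2 :: "('a::topological_space set \<Rightarrow> real) \<Rightarrow> bool" where
  "choquet_capacity_2 lP \<longleftrightarrow>
     credal_set lP \<noteq> {} \<and>
     (\<forall>A\<in>sets borel. lP A = (INF P\<in>credal_set lP. measure P A)) \<and>
     weakly_seq_compact_pm (credal_set lP) \<and>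
     (\<forall>A\<in>sets borel. \<forall>B\<in>sets borel. lP (A \<union> B) \<ge> lP A + lP B - lP (A \<inter> B))"

definition upper_prob :: "('a set \<Rightarrow> real) \<Rightarrow> 'a set \<Rightarrow> real" where
  "upper_prob lP A = 1 - lP (- A)"

definition gbayes_lower :: "('a::topological_space set \<Rightarrow> real) \<Rightarrow> 'a set \<Rightarrow> 'a set \<Rightarrow> real" where
  "gbayes_lower lP A B = (INF P\<in>credal_set lP. measure P (A \<inter> B) / measure P B)"

definition gbayes_upper :: "('a::topological_space set \<Rightarrow> real) \<Rightarrow> 'a set \<Rightarrow> 'a set \<Rightarrow> real" where
  "gbayes_upper lP A B = (SUP P\<in>credal_set lP. measure P (A \<inter> B) / measure P B)"

definition measurable_partition :: "'a::topological_space set set \<Rightarrow> bool" where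
  "measurable_partition \<B> \<longleftrightarrow>
     \<B> \<subseteq> sets borel \<and> {} \<notin> \<B> \<and> \<Union>\<B> = UNIV \<and>
     (\<forall>B1\<in>\<B>. \<forall>B2\<in>\<B>. B1 \<noteq> B2 \<longrightarrow> B1 \<inter> B2 = {})"

definition induces_sure_loss ::
  "('a set \<Rightarrow> real) \<Rightarrow> ('a set \<Rightarrow> 'a set \<Rightarrow> real) \<Rightarrow> ('a set \<Rightarrow> 'a set \<Rightarrow> real)
   \<Rightarrow> 'a set set \<Rightarrow> 'a set \<Rightarrow> bool" where
  "induces_sure_loss lP cl cu \<B> A \<longleftrightarrow>
     (INF B\<in>\<B>. cl A B) > upper_prob lP A \<or> (SUP B\<in>\<B>. cu A B) < lP A"

definition strictly_contracts ::
  "('a set \<Rightarrow> real) \<Rightarrow> ('a set \<Rightarrow> 'a set \<Rightarrow> real) \<Rightarrow> ('a set \<Rightarrow> 'a set \<Rightarrow> real)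
   \<Rightarrow> 'a set set \<Rightarrow> 'a set \<Rightarrow> bool" where
  "strictly_contracts lP cl cu \<B> A \<longleftrightarrow>
     lP A < (INF B\<in>\<B>. cl A B) \<and> (INF B\<in>\<B>. cl A B) \<le> (SUP B\<in>\<B>. cu A B) \<and>
     (SUP B\<in>\<B>. cu A B) < upper_prob lP A"

definition contracts ::
  "('a set \<Rightarrow> real) \<Rightarrow> ('a set \<Rightarrow> 'a set \<Rightarrow> real) \<Rightarrow> ('a set \<Rightarrow> 'a set \<Rightarrow> real)
   \<Rightarrow> 'a set set \<Rightarrow> 'a set \<Rightarrow> bool" where
  "contracts lP cl cu \<B> A \<longleftrightarrow>
     lP A \<le> (INF B\<in>\<B>. cl A B) \<and> (INF B\<in>\<B>. cl A B) \<le> (SUP B\<in>\<B>. cu A B) \<and>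
     (SUP B\<in>\<B>. cu A B) \<le> upper_prob lP A \<and>
     (lP A < (INF B\<in>\<B>. cl A B) \<or> (SUP B\<in>\<B>. cu A B) < upper_prob lP A)"

end

theory Submission imports Defs begin
lemma part_sum:
  assumes P: "prob_space P" and cB: "countable Bs" and sub: "Bs \<subseteq> sets P"
    and U: "\<Union>Bs = space P" and dj: "\<forall>B1\<in>Bs. \<forall>B2\<in>Bs. B1 \<noteq> B2 \<longrightarrow> B1 \<inter> B2 = {}"
    and A: "A \<in> sets P"
  shows "emeasure P A = (\<integral>\<^sup>+B. emeasure P (A \<inter> B) \<partial>count_space Bs)"
    and "1 = (\<integral>\<^sup>+B. emeasure P B \<partial>count_space Bs)"
proof -
  have d1: "disjoint_family_on (\<lambda>B. A \<inter> B) Bs" using dj unfolding disjoint_family_on_def by blast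
  have d2: "disjoint_family_on (\<lambda>B. B) Bs" using dj unfolding disjoint_family_on_def by blast
  have "A = \<Union>((\<lambda>B. A \<inter> B) ` Bs)" using U sets.sets_into_space[OF A] by blast
  then show "emeasure P A = (\<integral>\<^sup>+B. emeasure P (A \<inter> B) \<partial>count_space Bs)"
    using emeasure_UN_countable[OF _ cB d1, of P] A sub by auto
  have "space P = \<Union>((\<lambda>B. B) ` Bs)" using U by simp
  then show "1 = (\<integral>\<^sup>+B. emeasure P B \<partial>count_space Bs)"
    using emeasure_UN_countable[OF _ cB d2, of P] sub prob_space.emeasure_space_1[OF P] by auto
qed

lemma lower_part:
  assumes P: "prob_space P" and cB: "countable Bs" and sub: "Bs \<subseteq> sets P"
    and U: "\<Union>Bs = space P" and dj: "\<forall>B1\<in>Bs. \<forall>B2\<in>Bs. B1 \<noteq> B2 \<longrightarrow> B1 \<inter> B2 = {}"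
    and A: "A \<in> sets P" and c: "c \<ge> 0"
    and h: "\<forall>B\<in>Bs. c * measure P B \<le> measure P (A \<inter> B)"
  shows "c \<le> measure P A"
proof -
  interpret prob_space P by fact
  have "ennreal c = ennreal c * (\<integral>\<^sup>+B. emeasure P B \<partial>count_space Bs)"
    using part_sum(2)[OF assms(1-6)] by simp
  also have "\<dots> = (\<integral>\<^sup>+B. ennreal c * emeasure P B \<partial>count_space Bs)"
    by (simp add: nn_integral_cmult)
  also have "\<dots> \<le> (\<integral>\<^sup>+B. emeasure P (A \<inter> B) \<partial>count_space Bs)"
  proof (rule nn_integral_mono)
    fix B assume "B \<in> space (count_space Bs)"
    then have "B \<in> Bs" by simp
    then show "ennreal c * emeasure P B \<le> emeasure P (A \<inter> B)"
      using h c sub A by (simp add: emeasure_eq_measure ennreal_mult[symmetric] ennreal_leI)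
  qed
  also have "\<dots> = emeasure P A" using part_sum(1)[OF assms(1-6)] by simp
  finally show ?thesis by (simp add: emeasure_eq_measure)
qed

lemma upper_part:
  assumes P: "prob_space P" and cB: "countable Bs" and sub: "Bs \<subseteq> sets P"
    and U: "\<Union>Bs = space P" and dj: "\<forall>B1\<in>Bs. \<forall>B2\<in>Bs. B1 \<noteq> B2 \<longrightarrow> B1 \<inter> B2 = {}"
    and A: "A \<in> sets P" and c: "c \<ge> 0"
    and h: "\<forall>B\<in>Bs. measure P (A \<inter> B) \<le> c * measure P B"
  shows "measure P A \<le> c"
proof -
  interpret prob_space P by fact
  have "emeasure P A = (\<integral>\<^sup>+B. emeasure P (A \<inter> B) \<partial>count_space Bs)"
    using part_sum(1)[OF assms(1-6)] by simp
  also have "\<dots> \<le> (\<integral>\<^sup>+B. ennreal c * emeasure P B \<partial>count_space Bs)"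
  proof (rule nn_integral_mono)
    fix B assume "B \<in> space (count_space Bs)"
    then have "B \<in> Bs" by simp
    then show "emeasure P (A \<inter> B) \<le> ennreal c * emeasure P B"
      using h c sub A by (simp add: emeasure_eq_measure ennreal_mult[symmetric] ennreal_leI)
  qed
  also have "\<dots> = ennreal c * (\<integral>\<^sup>+B. emeasure P B \<partial>count_space Bs)"
    by (simp add: nn_integral_cmult)
  also have "\<dots> = ennreal c"
    using part_sum(2)[OF assms(1-6)] by simp
  finally show ?thesis using c by (simp add: emeasure_eq_measure)
qed
theorem theorem5p2:
  fixes lP :: "'a::polish_space set \<Rightarrow> real"
    and \<B> :: "'a set set"
    and A :: "'a set"
  assumes "choquet_capacity_2 lP"
    and "countable \<B>"
    and "measurable_partition \<B>"
    and "\<forall>B\<in>\<B>. lP B > 0"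
    and "A \<in> sets borel"
  shows "\<not> induces_sure_loss lP (gbayes_lower lP) (gbayes_upper lP) \<B> A
       \<and> \<not> strictly_contracts lP (gbayes_lower lP) (gbayes_upper lP) \<B> A
       \<and> \<not> contracts lP (gbayes_lower lP) (gbayes_upper lP) \<B> A"
proof -
  define Cr where "Cr = credal_set lP"
  have ch: "Cr \<noteq> {}" "\<forall>A\<in>sets borel. lP A = (INF P\<in>Cr. measure P A)"
    using assms(1) unfolding choquet_capacity_2_def Cr_def by auto
  have Cr: "prob_space P" "sets P = sets borel" "\<forall>A\<in>sets borel. lP A \<le> measure P A"
    if "P \<in> Cr" for P using that unfolding Cr_def credal_set_def by auto
  have mp: "\<B> \<subseteq> sets borel" "\<Union>\<B> = UNIV" "\<forall>B1\<in>\<B>. \<forall>B2\<in>\<B>. B1 \<noteq> B2 \<longrightarrow> B1 \<inter> B2 = {}"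
    using assms(3) unfolding measurable_partition_def by auto
  have Bne: "\<B> \<noteq> {}" using mp(2) by auto
  define r where "r P B = measure P (A \<inter> B) / measure P B" for P B
  have posB: "measure P B > 0" if "P \<in> Cr" "B \<in> \<B>" for P B
    using Cr(3)[OF that(1)] assms(4) that mp(1) by force
  have r01: "0 \<le> r P B \<and> r P B \<le> 1" if "P \<in> Cr" "B \<in> \<B>" for P B
  proof -
    interpret prob_space P using Cr that by auto
    have "B \<in> sets P" using Cr(2)[OF that(1)] mp(1) that(2) by auto
    then have "measure P (A \<inter> B) \<le> measure P B" by (intro finite_measure_mono) auto
    then show ?thesis using posB[OF that] unfolding r_def by auto
  qed
  have gl: "gbayes_lower lP A B = (INF P\<in>Cr. r P B)" for B
    unfolding gbayes_lower_def r_def Cr_def by simp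
  have gu: "gbayes_upper lP A B = (SUP P\<in>Cr. r P B)" for B
    unfolding gbayes_upper_def r_def Cr_def by simp
  have gl01: "0 \<le> gbayes_lower lP A B \<and> gbayes_lower lP A B \<le> r P B" if "P \<in> Cr" "B \<in> \<B>" for P B
    unfolding gl using r01 that ch(1)
    by (auto intro!: cINF_greatest cINF_lower bdd_belowI[where m=0])
  have gu01: "gbayes_upper lP A B \<le> 1 \<and> r P B \<le> gbayes_upper lP A B" if "P \<in> Cr" "B \<in> \<B>" for P B
    unfolding gu using r01 that ch(1)
    by (auto intro!: cSUP_least cSUP_upper bdd_aboveI[where M=1])
  define L where "L = (INF B\<in>\<B>. gbayes_lower lP A B)"
  define U where "U = (SUP B\<in>\<B>. gbayes_upper lP A B)"
  obtain P0 where P0: "P0 \<in> Cr" using ch(1) by auto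
  have L0: "0 \<le> L" and Lr: "L \<le> r P B" if "P \<in> Cr" "B \<in> \<B>" for P B
  proof -
    show "0 \<le> L" unfolding L_def using gl01 Bne P0 by (auto intro!: cINF_greatest)
    have "L \<le> gbayes_lower lP A B" unfolding L_def using gl01 P0 that(2)
      by (auto intro!: cINF_lower bdd_belowI[where m=0])
    then show "L \<le> r P B" using gl01[OF that] by linarith
  qed
  have U1: "U \<le> 1" and Ur: "r P B \<le> U" if "P \<in> Cr" "B \<in> \<B>" for P B
  proof -
    show "U \<le> 1" unfolding U_def using gu01 Bne P0 by (auto intro!: cSUP_least)
    have "gbayes_upper lP A B \<le> U" unfolding U_def using gu01 P0 that(2)
      by (auto intro!: cSUP_upper bdd_aboveI[where M=1])
    then show "r P B \<le> U" using gu01[OF that] by linarith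
  qed
  have L0': "0 \<le> L" using L0[OF P0] Bne by auto
  have U0: "0 \<le> U" using Ur[OF P0] r01[OF P0] Bne by force
  have LPA: "L \<le> measure P A" if P: "P \<in> Cr" for P
  proof (rule lower_part[of P \<B>])
    show "prob_space P" using Cr P by auto
    show "\<B> \<subseteq> sets P" "A \<in> sets P" using Cr(2)[OF P] mp(1) assms(5) by auto
    show "\<Union>\<B> = space P" using mp(2) sets_eq_imp_space_eq[OF Cr(2)[OF P]] by simp
    show "\<forall>B\<in>\<B>. L * measure P B \<le> measure P (A \<inter> B)"
      using Lr[OF P] posB[OF P] unfolding r_def by (simp add: pos_le_divide_eq)
  qed (use assms(2) mp(3) L0' in auto)
  have UPA: "measure P A \<le> U" if P: "P \<in> Cr" for P
  proof (rule upper_part[of P \<B>])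
    show "prob_space P" using Cr P by auto
    show "\<B> \<subseteq> sets P" "A \<in> sets P" using Cr(2)[OF P] mp(1) assms(5) by auto
    show "\<Union>\<B> = space P" using mp(2) sets_eq_imp_space_eq[OF Cr(2)[OF P]] by simp
    show "\<forall>B\<in>\<B>. measure P (A \<inter> B) \<le> U * measure P B"
      using Ur[OF P] posB[OF P] unfolding r_def by (simp add: pos_divide_le_eq)
  qed (use assms(2) mp(3) U0 in auto)
  have compl: "measure P (- A) = 1 - measure P A" if P: "P \<in> Cr" for P
  proof -
    interpret prob_space P using Cr P by auto
    have "space P = UNIV" using Cr(2)[OF P] sets_eq_imp_space_eq by fastforce
    then show ?thesis using prob_compl[of A] Cr(2)[OF P] assms(5) by (simp add: Compl_eq_Diff_UNIV)
  qed
  have cA: "- A \<in> sets borel" using assms(5) by auto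
  have LlP: "L \<le> lP A" unfolding ch(2)[rule_format, OF assms(5)]
    using LPA ch(1) by (auto intro!: cINF_greatest)
  have UuP: "upper_prob lP A \<le> U"
  proof -
    have "1 - U \<le> lP (- A)" unfolding ch(2)[rule_format, OF cA]
      using UPA compl ch(1) by (force intro!: cINF_greatest)
    then show ?thesis unfolding upper_prob_def by linarith
  qed
  have lu: "lP A \<le> upper_prob lP A"
  proof -
    have "lP A \<le> measure P0 A" "lP (- A) \<le> measure P0 (- A)"
      using Cr(3)[OF P0] assms(5) cA by auto
    then show ?thesis using compl[OF P0] unfolding upper_prob_def by linarith
  qed
  show ?thesis
    unfolding induces_sure_loss_def strictly_contracts_def contracts_def
      L_def[symmetric] U_def[symmetric]
    using LlP UuP lu by linarith
qed

end
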